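(* Fix $l\in[r]$. Let $|\Psi_{l-1}\rangle=F_{\beta_{l-1}}(H)|\Psi\rangle/\|F_{\beta_{l-1}}(H)|\Psi\rangle\|$ and $|\Psi_l\rangle=F_{\beta_l}(H)|\Psi\rangle/\|F_{\beta_l}(H)|\Psi\rangle\|$ be the ideal input and output states of the $l$-th fragment, and let the actual input be $|\tilde\Psi_{l-1}\rangle=|\Psi_{l-1}\rangle+|\Xi_{l-1}\rangle$ with $\varepsilon_{l-1}:=\||\Xi_{l-1}\rangle\|$. Let $U$ be an $(\varepsilon'_l,\alpha_l)$-block-encoding of $F_{\Delta\beta_l}(H)$ with $\|\langle0|U|0\rangle-\alpha_lF_{\Delta\beta_l}(H)\|=\varepsilon'_l$, and write the actual post-selected output as $|\tilde\Psi_l\rangle=\frac{\langle0|U|0\rangle|\tilde\Psi_{l-1}\rangle}{\|\langle0|U|0\rangle|\tilde\Psi_{l-1}\rangle\|}=|\Psi_l\rangle+|\Xi_l\rangle$. If $\varepsilon_{l-1}+\varepsilon'_l\le\varepsilon_l\,\|\alpha_lF_{\Delta\beta_l}(H)|\Psi_{l-1}\rangle\|/2$ and $\varepsilon_l\ll1$, then $\||\Xi_l\rangle\|=\mathcal{O}(\varepsilon_l)$.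
   Context: $H$ is a Hamiltonian with $\|H\|\le1$ and smallest eigenvalue $\lambda_{\min}$; $F_b(H)=e^{-b(H-\lambda_{\min})}$. $|\Psi\rangle$ is a unit vector, $\Delta\beta_1,\dots,\Delta\beta_r>0$, $\beta_0=0$, $\beta_l=\sum_{k\le l}\Delta\beta_k$, $\alpha_l\in(0,1]$. A unitary $U$ on $\mathbb{H}_\mathcal{S}\otimes\mathbb{H}_\mathcal{A}$ is an $(\varepsilon,\alpha)$-block-encoding of $A$ if $\|\alpha A-\langle0|U|0\rangle\|\le\varepsilon$ for some $|0\rangle\in\mathbb{H}_\mathcal{A}$. *)

theory Defs
  imports "HOL-Analysis.Analysis" "Jordan_Normal_Form.Schur_Decomposition" "Jordan_Normal_Form.Char_Poly"
begin

definition vnorm :: "complex vec \<Rightarrow> real" where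
  "vnorm v = sqrt (\<Sum>i<dim_vec v. (cmod (v $ i))\<^sup>2)"

definition normalize_vec :: "complex vec \<Rightarrow> complex vec" where
  "normalize_vec v = complex_of_real (1 / vnorm v) \<cdot>\<^sub>v v"

definition opnorm :: "complex mat \<Rightarrow> real" where
  "opnorm A = Sup {vnorm (A *\<^sub>v v) | v. v \<in> carrier_vec (dim_col A) \<and> vnorm v \<le> 1}"

definition hermitian_mat :: "complex mat \<Rightarrow> bool" where
  "hermitian_mat A \<longleftrightarrow> A \<in> carrier_mat (dim_row A) (dim_row A) \<and> mat_adjoint A = A"

definition unitary_mat :: "complex mat \<Rightarrow> bool" where
  "unitary_mat U \<longleftrightarrow> U \<in> carrier_mat (dim_row U) (dim_row U) \<and>
     mat_adjoint U * U = 1\<^sub>m (dim_row U) \<and> U * mat_adjoint U = 1\<^sub>m (dim_row U)"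

definition mat_exp :: "complex mat \<Rightarrow> complex mat" where
  "mat_exp A = mat (dim_row A) (dim_col A)
     (\<lambda>(i,j). \<Sum>k. (A ^\<^sub>m k) $$ (i,j) / of_nat (fact k))"

text \<open>Smallest eigenvalue of a Hermitian matrix (its eigenvalues are real).\<close>
definition lambda_min :: "complex mat \<Rightarrow> real" where
  "lambda_min H = Min {x::real. eigenvalue H (complex_of_real x)}"

definition F_op :: "real \<Rightarrow> complex mat \<Rightarrow> complex mat" where
  "F_op b H = mat_exp (complex_of_real (- b) \<cdot>\<^sub>m
                 (H - complex_of_real (lambda_min H) \<cdot>\<^sub>m 1\<^sub>m (dim_row H)))"

text \<open>Partial matrix element  <phi| U |phi>  on the ancilla, for U acting on
  C^n (system) tensor C^m (ancilla); basis index of |i> tensor |a> is i*m+a.\<close>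
definition anc_block :: "nat \<Rightarrow> nat \<Rightarrow> complex vec \<Rightarrow> complex mat \<Rightarrow> complex mat" where
  "anc_block n m \<phi> U = mat n n (\<lambda>(i,j).
     \<Sum>a<m. \<Sum>b<m. cnj (\<phi> $ a) * \<phi> $ b * U $$ (i*m + a, j*m + b))"

definition block_encoding :: "nat \<Rightarrow> nat \<Rightarrow> real \<Rightarrow> real \<Rightarrow> complex mat \<Rightarrow> complex mat \<Rightarrow> bool" where
  "block_encoding n m eps alpha A U \<longleftrightarrow> U \<in> carrier_mat (n*m) (n*m) \<and> unitary_mat U \<and>
     (\<exists>\<phi>. \<phi> \<in> carrier_vec m \<and> vnorm \<phi> = 1 \<and>
         opnorm (complex_of_real alpha \<cdot>\<^sub>m A - anc_block n m \<phi> U) \<le> eps)"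

end

theory Submission
  imports Defs
begin


lemma vnorm_L2: "vnorm v = L2_set (\<lambda>i. cmod (v $ i)) {..<dim_vec v}"
  unfolding vnorm_def L2_set_def by simp

lemma vnorm_nonneg: "0 \<le> vnorm v"
  unfolding vnorm_def by (auto intro: sum_nonneg)

lemma vnorm_sq: "(vnorm v)^2 = (\<Sum>i<dim_vec v. (cmod (v $ i))^2)"
  unfolding vnorm_def by (simp add: sum_nonneg)

lemma vnorm_add: assumes "dim_vec u = dim_vec v" shows "vnorm (u + v) \<le> vnorm u + vnorm v"
proof -
  have "vnorm (u + v) = L2_set (\<lambda>i. cmod ((u+v) $ i)) {..<dim_vec v}"
    using assms by (simp add: vnorm_L2)
  also have "\<dots> \<le> L2_set (\<lambda>i. cmod (u $ i) + cmod (v $ i)) {..<dim_vec v}"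
    by (rule L2_set_mono) (auto simp: norm_triangle_ineq)
  also have "\<dots> \<le> vnorm u + vnorm v" using assms
    by (simp add: vnorm_L2 L2_set_triangle_ineq)
  finally show ?thesis .
qed

lemma vnorm_smult: "vnorm (c \<cdot>\<^sub>v v) = cmod c * vnorm v"
proof -
  have "vnorm (c \<cdot>\<^sub>v v) = L2_set (\<lambda>i. cmod c * cmod (v $ i)) {..<dim_vec v}"
    unfolding vnorm_L2 by (auto intro!: L2_set_cong simp: norm_mult)
  also have "\<dots> = cmod c * vnorm v" by (simp add: L2_set_right_distrib vnorm_L2)
  finally show ?thesis .
qed

lemma vnorm_comp: "i < dim_vec v \<Longrightarrow> cmod (v $ i) \<le> vnorm v"
  unfolding vnorm_L2 by (rule member_le_L2_set) auto

lemma vnorm_zero: "vnorm v = 0 \<Longrightarrow> v = 0\<^sub>v (dim_vec v)"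
proof (intro eq_vecI)
  fix i assume "vnorm v = 0" "i < dim_vec (0\<^sub>v (dim_vec v))"
  then show "v $ i = 0\<^sub>v (dim_vec v) $ i"
    using vnorm_comp[of i v] by auto
qed auto

lemma vnorm_0 [simp]: "vnorm (0\<^sub>v n) = 0"
  unfolding vnorm_def by simp

lemma vnorm_minus_sym: assumes "dim_vec u = dim_vec v" shows "vnorm (u - v) = vnorm (v - u)"
proof -
  have "v - u = (-1) \<cdot>\<^sub>v (u - v)" using assms by (intro eq_vecI) auto
  then show ?thesis by (simp add: vnorm_smult)
qed

lemma vnorm_diff_tri: assumes "dim_vec u = dim_vec v" "dim_vec w = dim_vec v"
  shows "vnorm (u - v) \<le> vnorm (u - w) + vnorm (w - v)"
proof -
  have "u - v = (u - w) + (w - v)" using assms by (intro eq_vecI) auto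
  then show ?thesis using vnorm_add[of "u - w" "w - v"] assms by simp
qed

lemma vnorm_rev_tri: assumes "dim_vec u = dim_vec v"
  shows "\<bar>vnorm u - vnorm v\<bar> \<le> vnorm (u - v)"
proof -
  have "u = (u - v) + v" using assms by (intro eq_vecI) auto
  then have 1: "vnorm u \<le> vnorm (u - v) + vnorm v" using vnorm_add[of "u - v" v] assms
    by (metis index_minus_vec(2))
  have "v = (v - u) + u" using assms by (intro eq_vecI) auto
  then have 2: "vnorm v \<le> vnorm (v - u) + vnorm u" using vnorm_add[of "v - u" u] assms
    by (metis index_minus_vec(2))
  show ?thesis using 1 2 vnorm_minus_sym[OF assms] by linarith
qed

lemma dim_normalize [simp]: "dim_vec (normalize_vec v) = dim_vec v"
  unfolding normalize_vec_def by simp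

lemma vnorm_normalize_le: "vnorm (normalize_vec v) \<le> 1"
  unfolding normalize_vec_def vnorm_smult using vnorm_nonneg[of v]
  by (cases "vnorm v = 0") (auto simp: norm_divide)

lemma normalize_scale: assumes "c > 0"
  shows "normalize_vec (complex_of_real c \<cdot>\<^sub>v v) = normalize_vec v"
  unfolding normalize_vec_def vnorm_smult using assms
  by (intro eq_vecI) auto

lemma normalize_diff: assumes "dim_vec x = dim_vec y" "vnorm y > 0"
  shows "vnorm (normalize_vec x - normalize_vec y) \<le> 2 * vnorm (x - y) / vnorm y"
proof (cases "vnorm x = 0")
  case True
  then have x0: "x = 0\<^sub>v (dim_vec y)" using vnorm_zero assms by metis
  have "normalize_vec x - normalize_vec y = (-1) \<cdot>\<^sub>v normalize_vec y"
    using x0 unfolding normalize_vec_def by (intro eq_vecI) auto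
  then have "vnorm (normalize_vec x - normalize_vec y) = 1"
    using assms by (simp add: vnorm_smult normalize_vec_def norm_divide)
  moreover have "x - y = (-1) \<cdot>\<^sub>v y" using x0 by (intro eq_vecI) auto
  ultimately show ?thesis using assms by (simp add: vnorm_smult)
next
  case False
  then have xp: "vnorm x > 0" using vnorm_nonneg[of x] by linarith
  have eq: "normalize_vec x - normalize_vec y =
     complex_of_real (1 / vnorm y) \<cdot>\<^sub>v (x - y) + complex_of_real (1 / vnorm x - 1 / vnorm y) \<cdot>\<^sub>v x"
    using assms unfolding normalize_vec_def by (intro eq_vecI) (auto simp: algebra_simps)
  have "vnorm (normalize_vec x - normalize_vec y) \<le>
     vnorm (x - y) / vnorm y + \<bar>1 / vnorm x - 1 / vnorm y\<bar> * vnorm x"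
  proof -
    have "vnorm (complex_of_real (1 / vnorm y) \<cdot>\<^sub>v (x - y) + complex_of_real (1 / vnorm x - 1 / vnorm y) \<cdot>\<^sub>v x)
      \<le> vnorm (complex_of_real (1 / vnorm y) \<cdot>\<^sub>v (x - y)) + vnorm (complex_of_real (1 / vnorm x - 1 / vnorm y) \<cdot>\<^sub>v x)"
      by (rule vnorm_add) (simp add: assms)
    also have "\<dots> = \<bar>1 / vnorm y\<bar> * vnorm (x - y) + \<bar>1 / vnorm x - 1 / vnorm y\<bar> * vnorm x"
      by (simp only: vnorm_smult norm_of_real)
    finally show ?thesis unfolding eq using assms(2) by simp
  qed
  also have "\<bar>1 / vnorm x - 1 / vnorm y\<bar> * vnorm x = \<bar>vnorm y - vnorm x\<bar> / vnorm y"
    using xp assms(2) by (simp add: field_simps abs_mult)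
  also have "\<bar>vnorm y - vnorm x\<bar> \<le> vnorm (x - y)"
    using vnorm_rev_tri[OF assms(1)] by linarith
  finally show ?thesis using assms(2) by (simp add: divide_right_mono add_divide_distrib[symmetric])
qed



lemma mat_vec_comp: "i < dim_row A \<Longrightarrow> dim_vec v = dim_col A \<Longrightarrow> (A *\<^sub>v v) $ i = (\<Sum>j<dim_vec v. A $$ (i,j) * v $ j)"
  by (auto simp: scalar_prod_def atLeast0LessThan intro!: sum.cong)

lemma opnorm_set_bdd:
  assumes "v \<in> carrier_vec (dim_col A)" "vnorm v \<le> 1"
  shows "vnorm (A *\<^sub>v v) \<le> (\<Sum>i<dim_row A. \<Sum>j<dim_col A. cmod (A $$ (i,j)))"
proof -
  have "vnorm (A *\<^sub>v v) \<le> (\<Sum>i<dim_row A. cmod ((A *\<^sub>v v) $ i))"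
    unfolding vnorm_L2 using L2_set_le_sum_abs[of "\<lambda>i. cmod ((A *\<^sub>v v) $ i)" "{..<dim_row A}"] by simp
  also have "\<dots> \<le> (\<Sum>i<dim_row A. \<Sum>j<dim_col A. cmod (A $$ (i,j)))"
  proof (rule sum_mono)
    fix i assume i: "i \<in> {..<dim_row A}"
    have "cmod ((A *\<^sub>v v) $ i) = cmod (\<Sum>j<dim_col A. A $$ (i,j) * v $ j)"
      using i assms by (subst mat_vec_comp) auto
    also have "\<dots> \<le> (\<Sum>j<dim_col A. cmod (A $$ (i,j) * v $ j))" by (rule norm_sum)
    also have "\<dots> \<le> (\<Sum>j<dim_col A. cmod (A $$ (i,j)))"
    proof (rule sum_mono)
      fix j assume "j \<in> {..<dim_col A}"
      then have "cmod (v $ j) \<le> 1" using vnorm_comp[of j v] assms by auto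
      then show "cmod (A $$ (i,j) * v $ j) \<le> cmod (A $$ (i,j))"
        by (simp add: norm_mult mult_left_le)
    qed
    finally show "cmod ((A *\<^sub>v v) $ i) \<le> (\<Sum>j<dim_col A. cmod (A $$ (i,j)))" .
  qed
  finally show ?thesis .
qed

lemma opnorm_bdd: "bdd_above {vnorm (A *\<^sub>v v) | v. v \<in> carrier_vec (dim_col A) \<and> vnorm v \<le> 1}"
  using opnorm_set_bdd by (auto intro!: bdd_aboveI)

lemma opnorm_nonneg: "0 \<le> opnorm A"
proof -
  have "vnorm (A *\<^sub>v 0\<^sub>v (dim_col A)) \<le> opnorm A"
    unfolding opnorm_def by (rule cSup_upper[OF _ opnorm_bdd]) auto
  then show ?thesis using vnorm_nonneg order_trans by blast
qed

lemma opnorm_apply: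
  assumes "v \<in> carrier_vec (dim_col A)"
  shows "vnorm (A *\<^sub>v v) \<le> opnorm A * vnorm v"
proof (cases "vnorm v = 0")
  case True
  then have "v = 0\<^sub>v (dim_col A)" using vnorm_zero assms by fastforce
  then have "A *\<^sub>v v = 0\<^sub>v (dim_row A)" by (intro eq_vecI) (auto simp: mat_vec_comp)
  then show ?thesis using True by simp
next
  case False
  then have p: "vnorm v > 0" using vnorm_nonneg[of v] by linarith
  let ?u = "complex_of_real (1 / vnorm v) \<cdot>\<^sub>v v"
  have u: "?u \<in> carrier_vec (dim_col A)" "vnorm ?u \<le> 1"
    using assms p by (auto simp: vnorm_smult norm_divide)
  have "vnorm (A *\<^sub>v ?u) \<le> opnorm A"
    unfolding opnorm_def by (rule cSup_upper[OF _ opnorm_bdd]) (use u in auto)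
  moreover have "A *\<^sub>v ?u = complex_of_real (1 / vnorm v) \<cdot>\<^sub>v (A *\<^sub>v v)"
    using assms by (intro mult_mat_vec) auto
  ultimately have "vnorm (A *\<^sub>v v) / vnorm v \<le> opnorm A"
    using p by (simp add: vnorm_smult norm_divide)
  then show ?thesis using p by (simp add: pos_divide_le_eq)
qed



lemma vnorm_sq_complex: "complex_of_real ((vnorm v)^2) = (\<Sum>i<dim_vec v. cnj (v$i) * v$i)"
  unfolding vnorm_sq of_real_sum by (intro sum.cong refl) (metis complex_norm_square mult.commute of_real_power)

lemma vnorm_eq_from_sq: "(vnorm u)^2 = (vnorm v)^2 \<Longrightarrow> vnorm u = vnorm v"
  using vnorm_nonneg by (metis power2_eq_iff_nonneg)

lemma adjoint_entry: assumes "U \<in> carrier_mat N N" "k < N" "i < N"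
  shows "mat_adjoint U $$ (k,i) = cnj (U $$ (i,k))"
  using assms unfolding mat_adjoint_def by (simp add: mat_of_rows_index)

lemma unitary_preserves:
  assumes U: "U \<in> carrier_mat N N" and uni: "mat_adjoint U * U = 1\<^sub>m N" and w: "w \<in> carrier_vec N"
  shows "vnorm (U *\<^sub>v w) = vnorm w"
proof -
  have dadj: "mat_adjoint U \<in> carrier_mat N N" using U unfolding mat_adjoint_def by auto
  have ortho: "(\<Sum>i<N. cnj (U$$(i,k)) * U$$(i,l)) = (if k = l then 1 else 0)" if "k < N" "l < N" for k l
  proof -
    have "(mat_adjoint U * U) $$ (k,l) = (\<Sum>i<N. mat_adjoint U $$ (k,i) * U $$ (i,l))"
      using that dadj U by (auto simp: scalar_prod_def atLeast0LessThan intro!: sum.cong)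
    also have "\<dots> = (\<Sum>i<N. cnj (U$$(i,k)) * U$$(i,l))"
      using that U by (intro sum.cong refl) (simp add: adjoint_entry)
    finally show ?thesis using uni that by simp
  qed
  have comp: "(U *\<^sub>v w) $ i = (\<Sum>k<N. U $$ (i,k) * w $ k)" if "i < N" for i
    using that U w by (subst mat_vec_comp) auto
  have "complex_of_real ((vnorm (U *\<^sub>v w))^2) = (\<Sum>i<N. cnj ((U *\<^sub>v w) $ i) * (U *\<^sub>v w) $ i)"
    by (subst vnorm_sq_complex) (use U in simp)
  also have "\<dots> = (\<Sum>i<N. \<Sum>k<N. \<Sum>l<N. cnj (U $$ (i,k) * w $ k) * (U $$ (i,l) * w $ l))"
    by (intro sum.cong refl) (simp add: comp sum_product)
  also have "\<dots> = (\<Sum>k<N. \<Sum>l<N. cnj (w $ k) * w $ l * (\<Sum>i<N. cnj (U$$(i,k)) * U$$(i,l)))"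
    apply (rule trans[OF sum.swap])
    apply (rule sum.cong[OF refl])
    apply (rule trans[OF sum.swap])
    apply (rule sum.cong[OF refl])
    apply (simp add: sum_distrib_left mult_ac)
    done
  also have "\<dots> = (\<Sum>k<N. \<Sum>l<N. if l = k then cnj (w $ k) * w $ l else 0)"
    by (intro sum.cong refl) (auto simp: ortho)
  also have "\<dots> = (\<Sum>k<N. cnj (w $ k) * w $ k)"
    by (simp add: sum.delta')
  also have "\<dots> = complex_of_real ((vnorm w)^2)" by (subst vnorm_sq_complex) (use w in simp)
  finally show ?thesis using of_real_eq_iff vnorm_eq_from_sq by blast
qed



lemma idx_lt: "i < n \<Longrightarrow> a < (m::nat) \<Longrightarrow> i*m + a < n*m"
proof -
  assume "i < n" "a < m"
  then have "i*m + a < i*m + m" by simp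
  also have "\<dots> = (i+1)*m" by simp
  also have "\<dots> \<le> n*m" using \<open>i < n\<close> by (intro mult_right_mono) auto
  finally show ?thesis .
qed

lemma block_contract:
  assumes U: "U \<in> carrier_mat (n*m) (n*m)" and uni: "mat_adjoint U * U = 1\<^sub>m (n*m)"
    and phi: "\<phi> \<in> carrier_vec m" "vnorm \<phi> = 1" and x: "x \<in> carrier_vec n"
  shows "vnorm (anc_block n m \<phi> U *\<^sub>v x) \<le> vnorm x"
proof -
  define w where "w = vec (n*m) (\<lambda>k. x$(k div m) * \<phi>$(k mod m))"
  define y where "y = U *\<^sub>v w"
  define B where "B = anc_block n m \<phi> U"
  have wc: "w \<in> carrier_vec (n*m)" unfolding w_def by simp
  have wcomp: "w $ (b + j*m) = x$j * \<phi>$b" if "j < n" "b < m" for j b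
  proof -
    have "b + j*m < n*m" using idx_lt[OF that] by (simp add: add.commute)
    then show ?thesis unfolding w_def using that by simp
  qed
  have ycomp: "y $ (i*m+a) = (\<Sum>j<n. \<Sum>b<m. U $$ (i*m+a, j*m+b) * (x$j * \<phi>$b))"
    if "i < n" "a < m" for i a
  proof -
    have "y $ (i*m+a) = (\<Sum>k<n*m. U $$ (i*m+a, k) * w $ k)"
      unfolding y_def using U wc idx_lt[OF that] by (subst mat_vec_comp) auto
    also have "\<dots> = (\<Sum>j<n. \<Sum>b<m. U $$ (i*m+a, b + j*m) * w $ (b + j*m))"
      by (rule sum_mult_product)
    also have "\<dots> = (\<Sum>j<n. \<Sum>b<m. U $$ (i*m+a, j*m+b) * (x$j * \<phi>$b))"
      by (intro sum.cong refl) (simp add: wcomp add.commute)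
    finally show ?thesis .
  qed
  have Bc: "B \<in> carrier_mat n n" unfolding B_def anc_block_def by simp
  have Bcomp: "(B *\<^sub>v x) $ i = (\<Sum>a<m. cnj (\<phi>$a) * y $ (i*m+a))" if i: "i < n" for i
  proof -
    have "(B *\<^sub>v x) $ i = (\<Sum>j<n. B $$ (i,j) * x $ j)"
      using Bc x i by (subst mat_vec_comp) auto
    also have "\<dots> = (\<Sum>j<n. \<Sum>a<m. \<Sum>b<m. cnj (\<phi> $ a) * (U $$ (i*m + a, j*m + b) * (x$j * \<phi> $ b)))"
      using i unfolding B_def anc_block_def
      by (intro sum.cong refl) (simp add: sum_distrib_left sum_distrib_right mult_ac)
    also have "\<dots> = (\<Sum>a<m. \<Sum>j<n. \<Sum>b<m. cnj (\<phi> $ a) * (U $$ (i*m + a, j*m + b) * (x$j * \<phi> $ b)))"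
      by (rule sum.swap)
    also have "\<dots> = (\<Sum>a<m. cnj (\<phi>$a) * y $ (i*m+a))"
      using i by (intro sum.cong refl) (simp add: ycomp sum_distrib_left)
    finally show ?thesis .
  qed
  have L2phi: "L2_set (\<lambda>a. cmod (\<phi>$a)) {..<m} = 1" using phi by (simp add: vnorm_L2)
  have pw: "(cmod ((B *\<^sub>v x) $ i))^2 \<le> (\<Sum>a<m. (cmod (y $ (i*m+a)))^2)" if i: "i < n" for i
  proof -
    have "cmod ((B *\<^sub>v x) $ i) \<le> (\<Sum>a<m. cmod (cnj (\<phi>$a) * y $ (i*m+a)))"
      unfolding Bcomp[OF i] by (rule norm_sum)
    also have "\<dots> = (\<Sum>a<m. \<bar>cmod (\<phi>$a)\<bar> * \<bar>cmod (y $ (i*m+a))\<bar>)"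
      by (simp add: norm_mult)
    also have "\<dots> \<le> L2_set (\<lambda>a. cmod (\<phi>$a)) {..<m} * L2_set (\<lambda>a. cmod (y $ (i*m+a))) {..<m}"
      by (rule L2_set_mult_ineq)
    finally have "cmod ((B *\<^sub>v x) $ i) \<le> L2_set (\<lambda>a. cmod (y $ (i*m+a))) {..<m}"
      using L2phi by simp
    then have "(cmod ((B *\<^sub>v x) $ i))^2 \<le> (L2_set (\<lambda>a. cmod (y $ (i*m+a))) {..<m})^2"
      by (intro power_mono) auto
    also have "\<dots> = (\<Sum>a<m. (cmod (y $ (i*m+a)))^2)"
      unfolding L2_set_def by (simp add: sum_nonneg)
    finally show ?thesis .
  qed
  have "(vnorm (B *\<^sub>v x))^2 = (\<Sum>i<n. (cmod ((B *\<^sub>v x) $ i))^2)"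
    using Bc by (simp add: vnorm_sq)
  also have "\<dots> \<le> (\<Sum>i<n. \<Sum>a<m. (cmod (y $ (a + i*m)))^2)"
    using pw by (intro sum_mono) (simp add: add.commute)
  also have "\<dots> = (\<Sum>k<n*m. (cmod (y $ k))^2)"
    by (rule sum_mult_product[symmetric])
  also have "\<dots> = (vnorm y)^2" using U wc unfolding y_def by (simp add: vnorm_sq)
  also have "vnorm y = vnorm w" unfolding y_def by (rule unitary_preserves[OF U uni wc])
  also have "(vnorm w)^2 = (\<Sum>k<n*m. (cmod (w $ k))^2)" using wc by (simp add: vnorm_sq)
  also have "\<dots> = (\<Sum>j<n. \<Sum>b<m. (cmod (w $ (b + j*m)))^2)"
    by (rule sum_mult_product)
  also have "\<dots> = (\<Sum>j<n. (cmod (x$j))^2 * (\<Sum>b<m. (cmod (\<phi>$b))^2))"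
    by (intro sum.cong refl) (simp add: wcomp norm_mult power_mult_distrib sum_distrib_left)
  also have "\<dots> = (vnorm x)^2"
    using phi x vnorm_sq[of \<phi>] vnorm_sq[of x] by simp
  finally have "(vnorm (B *\<^sub>v x))^2 \<le> (vnorm x)^2" .
  then show ?thesis unfolding B_def using vnorm_nonneg by (meson power2_le_imp_le)
qed



lemma pow_mat_add: assumes K: "K \<in> carrier_mat N N"
  shows "K ^\<^sub>m q * K ^\<^sub>m r = K ^\<^sub>m (q + r)"
proof (induction r)
  case 0 then show ?case using K by simp
next
  case (Suc r)
  have "K ^\<^sub>m q * K ^\<^sub>m Suc r = (K ^\<^sub>m q * K ^\<^sub>m r) * K"
    using K by (simp add: assoc_mult_mat[symmetric, of _ N N _ N _ N])
  then show ?case using Suc by simp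
qed

lemma pow_mat_smult: fixes c :: complex assumes K: "K \<in> carrier_mat N N"
  shows "(c \<cdot>\<^sub>m K) ^\<^sub>m k = (c ^ k) \<cdot>\<^sub>m (K ^\<^sub>m k)"
proof (induction k)
  case 0 then show ?case using K by (auto intro!: eq_matI)
next
  case (Suc k)
  show ?case
    using K by (simp add: Suc) (intro eq_matI, auto simp: scalar_prod_def sum_distrib_left mult_ac intro!: sum.cong)
qed

lemma pow_entry_bound: assumes K: "K \<in> carrier_mat N N"
  shows "\<exists>M\<ge>1. \<forall>k i j. i < N \<longrightarrow> j < N \<longrightarrow> cmod ((K ^\<^sub>m k) $$ (i,j)) \<le> M ^ k"
proof -
  define M where "M = 1 + (\<Sum>p<N. \<Sum>q<N. cmod (K $$ (p,q)))"
  have M1: "M \<ge> 1" unfolding M_def by (auto intro!: sum_nonneg)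
  have col: "(\<Sum>p<N. cmod (K $$ (p,j))) \<le> M" if "j < N" for j
  proof -
    have "(\<Sum>p<N. cmod (K $$ (p,j))) \<le> (\<Sum>p<N. \<Sum>q<N. cmod (K $$ (p,q)))"
      by (intro sum_mono) (rule member_le_sum, use that in auto)
    then show ?thesis unfolding M_def by linarith
  qed
  have "\<forall>i j. i < N \<longrightarrow> j < N \<longrightarrow> cmod ((K ^\<^sub>m k) $$ (i,j)) \<le> M ^ k" for k
  proof (induction k)
    case 0 then show ?case using K by auto
  next
    case (Suc k)
    show ?case
    proof (intro allI impI)
      fix i j assume ij: "i < N" "j < N"
      have "(K ^\<^sub>m Suc k) $$ (i,j) = (\<Sum>p<N. (K ^\<^sub>m k) $$ (i,p) * K $$ (p,j))"
        using K ij by (auto simp: scalar_prod_def atLeast0LessThan intro!: sum.cong)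
      then have "cmod ((K ^\<^sub>m Suc k) $$ (i,j)) \<le> (\<Sum>p<N. cmod ((K ^\<^sub>m k) $$ (i,p)) * cmod (K $$ (p,j)))"
        by (simp add: norm_sum norm_mult order_trans[OF norm_sum])
      also have "\<dots> \<le> (\<Sum>p<N. M ^ k * cmod (K $$ (p,j)))"
        using Suc ij by (intro sum_mono mult_right_mono) auto
      also have "\<dots> = M ^ k * (\<Sum>p<N. cmod (K $$ (p,j)))" by (simp add: sum_distrib_left)
      also have "\<dots> \<le> M ^ k * M" using col[OF ij(2)] M1 by (intro mult_left_mono) auto
      finally show "cmod ((K ^\<^sub>m Suc k) $$ (i,j)) \<le> M ^ Suc k" by (simp add: mult.commute)
    qed
  qed
  then show ?thesis using M1 by blast
qed



definition eterm :: "complex \<Rightarrow> complex mat \<Rightarrow> nat \<Rightarrow> nat \<Rightarrow> nat \<Rightarrow> complex" where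
  "eterm c K k i j = c ^ k * (K ^\<^sub>m k) $$ (i,j) / fact k"

lemma mat_exp_dim: "mat_exp A \<in> carrier_mat (dim_row A) (dim_col A)"
  unfolding mat_exp_def by simp

lemma mat_exp_entry: assumes K: "K \<in> carrier_mat N N" and ij: "i < N" "j < N"
  shows "mat_exp (c \<cdot>\<^sub>m K) $$ (i,j) = (\<Sum>k. eterm c K k i j)"
  unfolding mat_exp_def eterm_def using K ij by (simp add: pow_mat_smult)

lemma eterm_summable: assumes K: "K \<in> carrier_mat N N" and ij: "i < N" "j < N"
  shows "summable (\<lambda>k. norm (eterm c K k i j))"
proof -
  obtain M where M: "M \<ge> 1" "\<And>k i j. i < N \<Longrightarrow> j < N \<Longrightarrow> cmod ((K ^\<^sub>m k) $$ (i,j)) \<le> M ^ k"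
    using pow_entry_bound[OF K] by blast
  show ?thesis
  proof (rule summable_comparison_test'[where N=0])
    show "summable (\<lambda>k. inverse (fact k) * (cmod c * M) ^ k)" by (rule summable_exp)
    fix k :: nat
    have "norm (norm (eterm c K k i j)) = cmod c ^ k * cmod ((K ^\<^sub>m k) $$ (i,j)) / fact k"
      unfolding eterm_def by (simp add: norm_mult norm_divide norm_power)
    also have "\<dots> \<le> cmod c ^ k * M ^ k / fact k"
      using M(2)[OF ij] by (intro divide_right_mono mult_left_mono) auto
    also have "\<dots> = inverse (fact k) * (cmod c * M) ^ k"
      by (simp add: power_mult_distrib field_simps)
    finally show "norm (norm (eterm c K k i j)) \<le> inverse (fact k) * (cmod c * M) ^ k" .
  qed
qed

lemma mat_exp_mult: assumes K: "K \<in> carrier_mat N N"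
  shows "mat_exp (a \<cdot>\<^sub>m K) * mat_exp (b \<cdot>\<^sub>m K) = mat_exp ((a + b) \<cdot>\<^sub>m K)"
proof (rule eq_matI)
  have d: "mat_exp (c \<cdot>\<^sub>m K) \<in> carrier_mat N N" for c
    using mat_exp_dim[of "c \<cdot>\<^sub>m K"] K by simp
  show "dim_row (mat_exp (a \<cdot>\<^sub>m K) * mat_exp (b \<cdot>\<^sub>m K)) = dim_row (mat_exp ((a + b) \<cdot>\<^sub>m K))"
    "dim_col (mat_exp (a \<cdot>\<^sub>m K) * mat_exp (b \<cdot>\<^sub>m K)) = dim_col (mat_exp ((a + b) \<cdot>\<^sub>m K))"
    using d[of a] d[of b] d[of "a+b"] by auto
  fix i j assume "i < dim_row (mat_exp ((a + b) \<cdot>\<^sub>m K))" "j < dim_col (mat_exp ((a + b) \<cdot>\<^sub>m K))"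
  then have ij: "i < N" "j < N" using d[of "a+b"] by auto
  have lhs: "(mat_exp (a \<cdot>\<^sub>m K) * mat_exp (b \<cdot>\<^sub>m K)) $$ (i,j) =
     (\<Sum>p<N. (\<Sum>k. eterm a K k i p) * (\<Sum>k. eterm b K k p j))"
    using d[of a] d[of b] ij K
    by (auto simp: scalar_prod_def atLeast0LessThan mat_exp_entry intro!: sum.cong)
  have s1: "(\<lambda>k. \<Sum>p<N. \<Sum>q\<le>k. eterm a K q i p * eterm b K (k - q) p j) sums
      (\<Sum>p<N. (\<Sum>k. eterm a K k i p) * (\<Sum>k. eterm b K k p j))"
    by (rule sums_sum, rule Cauchy_product_sums) (use eterm_summable[OF K] ij in auto)
  have eq: "(\<Sum>p<N. \<Sum>q\<le>k. eterm a K q i p * eterm b K (k - q) p j) = eterm (a+b) K k i j" for k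
  proof -
    have "(\<Sum>p<N. \<Sum>q\<le>k. eterm a K q i p * eterm b K (k - q) p j) =
        (\<Sum>q\<le>k. a^q * b^(k-q) / (fact q * fact (k-q)) * (\<Sum>p<N. (K ^\<^sub>m q) $$ (i,p) * (K ^\<^sub>m (k-q)) $$ (p,j)))"
      unfolding eterm_def
      by (subst sum.swap) (simp add: sum_distrib_left mult_ac)
    also have "\<dots> = (\<Sum>q\<le>k. a^q * b^(k-q) / (fact q * fact (k-q)) * (K ^\<^sub>m k) $$ (i,j))"
    proof (intro sum.cong refl)
      fix q assume q: "q \<in> {..k}"
      have "(\<Sum>p<N. (K ^\<^sub>m q) $$ (i,p) * (K ^\<^sub>m (k-q)) $$ (p,j)) = (K ^\<^sub>m q * K ^\<^sub>m (k-q)) $$ (i,j)"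
        using K ij by (auto simp: scalar_prod_def atLeast0LessThan intro!: sum.cong)
      also have "\<dots> = (K ^\<^sub>m k) $$ (i,j)" using q by (simp add: pow_mat_add[OF K])
      finally show "a^q * b^(k-q) / (fact q * fact (k-q)) * (\<Sum>p<N. (K ^\<^sub>m q) $$ (i,p) * (K ^\<^sub>m (k-q)) $$ (p,j))
         = a^q * b^(k-q) / (fact q * fact (k-q)) * (K ^\<^sub>m k) $$ (i,j)" by simp
    qed
    also have "\<dots> = (\<Sum>q\<le>k. of_nat (k choose q) * a^q * b^(k-q)) / fact k * (K ^\<^sub>m k) $$ (i,j)"
      unfolding sum_distrib_right sum_divide_distrib
      by (intro sum.cong refl) (simp add: binomial_fact field_simps)
    also have "\<dots> = eterm (a+b) K k i j" unfolding eterm_def binomial_ring by simp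
    finally show ?thesis .
  qed
  show "(mat_exp (a \<cdot>\<^sub>m K) * mat_exp (b \<cdot>\<^sub>m K)) $$ (i,j) = mat_exp ((a + b) \<cdot>\<^sub>m K) $$ (i,j)"
    unfolding lhs mat_exp_entry[OF K ij] using s1 unfolding eq by (rule sums_unique)
qed

lemma mat_exp_zero: assumes K: "K \<in> carrier_mat N N"
  shows "mat_exp (0 \<cdot>\<^sub>m K) = 1\<^sub>m N"
proof (rule eq_matI)
  have d: "mat_exp (0 \<cdot>\<^sub>m K) \<in> carrier_mat N N"
    using mat_exp_dim[of "0 \<cdot>\<^sub>m K"] K by simp
  then show "dim_row (mat_exp (0 \<cdot>\<^sub>m K)) = dim_row (1\<^sub>m N)" "dim_col (mat_exp (0 \<cdot>\<^sub>m K)) = dim_col (1\<^sub>m N)"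
    by auto
  fix i j assume "i < dim_row (1\<^sub>m N)" "j < dim_col (1\<^sub>m N)"
  then have ij: "i < N" "j < N" by auto
  have "(\<lambda>k. eterm 0 K k i j) = (\<lambda>k. if k = 0 then (1\<^sub>m N) $$ (i,j) else 0)"
    using K ij by (auto simp: eterm_def)
  then have "(\<lambda>k. eterm 0 K k i j) sums (1\<^sub>m N) $$ (i,j)"
    using sums_single[of 0 "\<lambda>_. (1\<^sub>m N) $$ (i,j)"] by simp
  then show "mat_exp (0 \<cdot>\<^sub>m K) $$ (i, j) = 1\<^sub>m N $$ (i, j)"
    unfolding mat_exp_entry[OF K ij] by (rule sums_unique[symmetric])
qed



lemma smult_mat_vec: assumes "A \<in> carrier_mat N N" "v \<in> carrier_vec N"
  shows "(k \<cdot>\<^sub>m A) *\<^sub>v v = k \<cdot>\<^sub>v (A *\<^sub>v v)"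
  using assms by (intro eq_vecI) (auto simp: scalar_prod_def sum_distrib_left mult_ac)

lemma main_bound:
  fixes H U :: "complex mat" and \<Psi> \<Xi>p \<phi> :: "complex vec"
  assumes H: "H \<in> carrier_mat n n" and Psi: "\<Psi> \<in> carrier_vec n" "vnorm \<Psi> = 1"
    and alpha: "0 < \<alpha>" and Xi: "\<Xi>p \<in> carrier_vec n"
    and phi: "\<phi> \<in> carrier_vec m" "vnorm \<phi> = 1"
    and U: "U \<in> carrier_mat (n*m) (n*m)" "unitary_mat U"
    and eps': "opnorm (anc_block n m \<phi> U - complex_of_real \<alpha> \<cdot>\<^sub>m F_op d H) = \<epsilon>'"
    and hyp: "vnorm \<Xi>p + \<epsilon>' \<le> \<epsilon> * vnorm ((complex_of_real \<alpha> \<cdot>\<^sub>m F_op d H) *\<^sub>v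
          normalize_vec (F_op b H *\<^sub>v \<Psi>)) / 2"
  shows "vnorm (normalize_vec (anc_block n m \<phi> U *\<^sub>v (normalize_vec (F_op b H *\<^sub>v \<Psi>) + \<Xi>p))
            - normalize_vec (F_op (b + d) H *\<^sub>v \<Psi>)) \<le> \<epsilon>"
proof -
  define K where "K = H - complex_of_real (lambda_min H) \<cdot>\<^sub>m 1\<^sub>m n"
  have Kc: "K \<in> carrier_mat n n" unfolding K_def using H by auto
  have Fdef: "F_op t H = mat_exp (complex_of_real (- t) \<cdot>\<^sub>m K)" for t
    unfolding F_op_def K_def using H by simp
  have Fc: "F_op t H \<in> carrier_mat n n" for t
    unfolding Fdef using mat_exp_dim[of "complex_of_real (- t) \<cdot>\<^sub>m K"] Kc by simp
  have Fmul: "F_op s H * F_op t H = F_op (t + s) H" for s t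
    unfolding Fdef mat_exp_mult[OF Kc] by (simp add: algebra_simps)
  have Finv: "F_op (- t) H * F_op t H = 1\<^sub>m n" for t
    unfolding Fdef mat_exp_mult[OF Kc] using mat_exp_zero[OF Kc] by simp
  have nz: "vnorm (F_op t H *\<^sub>v \<Psi>) > 0" for t
  proof (rule ccontr)
    assume "\<not> ?thesis"
    then have "vnorm (F_op t H *\<^sub>v \<Psi>) = 0" using vnorm_nonneg by (meson antisym not_le)
    then have z: "F_op t H *\<^sub>v \<Psi> = 0\<^sub>v n" using vnorm_zero Fc[of t] by fastforce
    have "\<Psi> = (F_op (- t) H * F_op t H) *\<^sub>v \<Psi>" using Finv Psi by simp
    also have "\<dots> = F_op (- t) H *\<^sub>v (F_op t H *\<^sub>v \<Psi>)" using Fc[of "-t"] Fc[of t] Psi by (intro assoc_mult_mat_vec)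
    also have "\<dots> = 0\<^sub>v n" unfolding z using Fc[of "-t"] by (intro eq_vecI) (auto simp: mat_vec_comp)
    finally show False using Psi by simp
  qed
  define g where "g = F_op b H *\<^sub>v \<Psi>"
  define h where "h = F_op (b + d) H *\<^sub>v \<Psi>"
  define B where "B = anc_block n m \<phi> U"
  define A where "A = complex_of_real \<alpha> \<cdot>\<^sub>m F_op d H"
  define Pp where "Pp = normalize_vec g"
  have gc: "g \<in> carrier_vec n" unfolding g_def using Fc[of b] Psi by auto
  have hc: "h \<in> carrier_vec n" unfolding h_def using Fc[of "b+d"] Psi by auto
  have gp: "vnorm g > 0" unfolding g_def by (rule nz)
  have hp: "vnorm h > 0" unfolding h_def by (rule nz)
  have Bc: "B \<in> carrier_mat n n" unfolding B_def anc_block_def by simp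
  have Ac: "A \<in> carrier_mat n n" unfolding A_def using Fc[of d] by simp
  have Ppc: "Pp \<in> carrier_vec n" unfolding Pp_def normalize_vec_def using gc by simp
  have Ppn: "vnorm Pp \<le> 1" unfolding Pp_def by (rule vnorm_normalize_le)
  have hg: "h = F_op d H *\<^sub>v g"
    unfolding h_def g_def Fmul[of d b, symmetric] using Fc[of d] Fc[of b] Psi by (intro assoc_mult_mat_vec)
  define y where "y = A *\<^sub>v Pp"
  have yeq: "y = complex_of_real (\<alpha> / vnorm g) \<cdot>\<^sub>v h"
  proof -
    have "y = complex_of_real \<alpha> \<cdot>\<^sub>v (F_op d H *\<^sub>v (complex_of_real (1 / vnorm g) \<cdot>\<^sub>v g))"
      unfolding y_def A_def Pp_def normalize_vec_def using Fc[of d] gc by (simp add: smult_mat_vec)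
    also have "\<dots> = complex_of_real \<alpha> \<cdot>\<^sub>v (complex_of_real (1 / vnorm g) \<cdot>\<^sub>v h)"
      unfolding hg using Fc[of d] gc by (simp add: mult_mat_vec)
    also have "\<dots> = complex_of_real (\<alpha> / vnorm g) \<cdot>\<^sub>v h"
      by (simp add: smult_smult_assoc)
    finally show ?thesis .
  qed
  have yc: "y \<in> carrier_vec n" unfolding yeq using hc by simp
  have yp: "vnorm y > 0" unfolding yeq vnorm_smult using alpha gp hp by simp
  have ny: "normalize_vec y = normalize_vec h"
    unfolding yeq using alpha gp by (intro normalize_scale) simp
  define x where "x = B *\<^sub>v (Pp + \<Xi>p)"
  have xc: "x \<in> carrier_vec n" unfolding x_def by (rule carrier_vecI) (use Bc in simp)
  have xy: "x - y = (B - A) *\<^sub>v Pp + B *\<^sub>v \<Xi>p"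
  proof -
    have "x = B *\<^sub>v Pp + B *\<^sub>v \<Xi>p" unfolding x_def using Bc Ppc Xi by (simp add: mult_add_distrib_mat_vec)
    moreover have "(B - A) *\<^sub>v Pp = B *\<^sub>v Pp - A *\<^sub>v Pp" using Bc Ac Ppc by (simp add: minus_mult_distrib_mat_vec)
    ultimately show ?thesis unfolding y_def using Bc Ac Ppc Xi by (intro eq_vecI) auto
  qed
  have e'nn: "0 \<le> \<epsilon>'" using eps' opnorm_nonneg by metis
  have "vnorm (x - y) \<le> vnorm ((B - A) *\<^sub>v Pp) + vnorm (B *\<^sub>v \<Xi>p)"
    unfolding xy using Bc Ac by (intro vnorm_add) simp
  also have "vnorm ((B - A) *\<^sub>v Pp) \<le> \<epsilon>' * vnorm Pp"
    using opnorm_apply[of Pp "B - A"] Bc Ac Ppc eps' Fc[of d] unfolding B_def A_def by simp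
  also have "\<dots> \<le> \<epsilon>'" using Ppn e'nn by (simp add: mult_left_le)
  also have "vnorm (B *\<^sub>v \<Xi>p) \<le> vnorm \<Xi>p"
    unfolding B_def using U phi Xi unitary_mat_def by (intro block_contract) auto
  finally have f1: "vnorm (x - y) \<le> \<epsilon> * vnorm y / 2" using hyp unfolding y_def A_def Pp_def g_def by linarith
  have "vnorm (normalize_vec x - normalize_vec y) \<le> 2 * vnorm (x - y) / vnorm y"
    using xc yc yp by (intro normalize_diff) auto
  also have "\<dots> \<le> (\<epsilon> * vnorm y) / vnorm y"
    using f1 yp by (intro divide_right_mono) auto
  also have "\<dots> = \<epsilon>" using yp by simp
  finally have "vnorm (normalize_vec x - normalize_vec y) \<le> \<epsilon>" .
  then show ?thesis unfolding ny x_def h_def B_def Pp_def g_def .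
qed


theorem lemma9:
  shows "\<exists>C>0. \<exists>c>0. \<forall>(n::nat) (m::nat) (H::complex mat) (\<Psi>::complex vec)
      (r::nat) (\<Delta>\<beta>::nat \<Rightarrow> real) (\<alpha>::nat \<Rightarrow> real) (l::nat)
      (\<Xi>\<^sub>p::complex vec) (\<phi>::complex vec) (U::complex mat) (\<epsilon>'::real) (\<epsilon>::real).
    let \<beta> = (\<lambda>j. \<Sum>k\<in>{1..j}. \<Delta>\<beta> k);
        \<Psi>\<^sub>p = normalize_vec (F_op (\<beta> (l-1)) H *\<^sub>v \<Psi>);
        \<Psi>\<^sub>l = normalize_vec (F_op (\<beta> l) H *\<^sub>v \<Psi>);
        B = anc_block n m \<phi> U;
        A = complex_of_real (\<alpha> l) \<cdot>\<^sub>m F_op (\<Delta>\<beta> l) H;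
        \<Psi>t\<^sub>l = normalize_vec (B *\<^sub>v (\<Psi>\<^sub>p + \<Xi>\<^sub>p));
        \<Xi>\<^sub>l = \<Psi>t\<^sub>l - \<Psi>\<^sub>l
    in (0 < n \<and> H \<in> carrier_mat n n \<and> hermitian_mat H \<and> opnorm H \<le> 1 \<and>
        \<Psi> \<in> carrier_vec n \<and> vnorm \<Psi> = 1 \<and>
        (\<forall>k\<in>{1..r}. 0 < \<Delta>\<beta> k \<and> 0 < \<alpha> k \<and> \<alpha> k \<le> 1) \<and>
        l \<in> {1..r} \<and> \<Xi>\<^sub>p \<in> carrier_vec n \<and>
        \<phi> \<in> carrier_vec m \<and> vnorm \<phi> = 1 \<and>
        U \<in> carrier_mat (n*m) (n*m) \<and> unitary_mat U \<and>
        opnorm (B - A) = \<epsilon>' \<and>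
        vnorm \<Xi>\<^sub>p + \<epsilon>' \<le> \<epsilon> * vnorm (A *\<^sub>v \<Psi>\<^sub>p) / 2 \<and>
        \<epsilon> \<le> c)
       \<longrightarrow> vnorm \<Xi>\<^sub>l \<le> C * \<epsilon>"
proof -
  have key: "\<And>(n::nat) (m::nat) (H::complex mat) (\<Psi>::complex vec)
      (r::nat) (\<Delta>\<beta>::nat \<Rightarrow> real) (\<alpha>::nat \<Rightarrow> real) (l::nat)
      (\<Xi>\<^sub>p::complex vec) (\<phi>::complex vec) (U::complex mat) (\<epsilon>'::real) (\<epsilon>::real). let \<beta> = (\<lambda>j. \<Sum>k\<in>{1..j}. \<Delta>\<beta> k);
        \<Psi>\<^sub>p = normalize_vec (F_op (\<beta> (l-1)) H *\<^sub>v \<Psi>);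
        \<Psi>\<^sub>l = normalize_vec (F_op (\<beta> l) H *\<^sub>v \<Psi>);
        B = anc_block n m \<phi> U;
        A = complex_of_real (\<alpha> l) \<cdot>\<^sub>m F_op (\<Delta>\<beta> l) H;
        \<Psi>t\<^sub>l = normalize_vec (B *\<^sub>v (\<Psi>\<^sub>p + \<Xi>\<^sub>p));
        \<Xi>\<^sub>l = \<Psi>t\<^sub>l - \<Psi>\<^sub>l
    in (0 < n \<and> H \<in> carrier_mat n n \<and> hermitian_mat H \<and> opnorm H \<le> 1 \<and>
        \<Psi> \<in> carrier_vec n \<and> vnorm \<Psi> = 1 \<and>
        (\<forall>k\<in>{1..r}. 0 < \<Delta>\<beta> k \<and> 0 < \<alpha> k \<and> \<alpha> k \<le> 1) \<and>
        l \<in> {1..r} \<and> \<Xi>\<^sub>p \<in> carrier_vec n \<and>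
        \<phi> \<in> carrier_vec m \<and> vnorm \<phi> = 1 \<and>
        U \<in> carrier_mat (n*m) (n*m) \<and> unitary_mat U \<and>
        opnorm (B - A) = \<epsilon>' \<and>
        vnorm \<Xi>\<^sub>p + \<epsilon>' \<le> \<epsilon> * vnorm (A *\<^sub>v \<Psi>\<^sub>p) / 2 \<and>
        \<epsilon> \<le> 1)
       \<longrightarrow> vnorm \<Xi>\<^sub>l \<le> 1 * \<epsilon>"
    unfolding Let_def
    apply (intro impI, elim conjE)
    subgoal premises p for n m H \<Psi> r \<Delta>\<beta> \<alpha> l \<Xi>\<^sub>p \<phi> U \<epsilon>' \<epsilon>
    proof -
      have l1: "1 \<le> l" using p(8) by simp
      have ap: "0 < \<alpha> l" using p(7) p(8) by blast
      have beta: "(\<Sum>k\<in>{1..l}. \<Delta>\<beta> k) = (\<Sum>k\<in>{1..l-1}. \<Delta>\<beta> k) + \<Delta>\<beta> l"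
      proof -
        have "l = Suc (l - 1)" using l1 by simp
        then have "(\<Sum>k\<in>{1..l}. \<Delta>\<beta> k) = (\<Sum>k\<in>{1..Suc (l-1)}. \<Delta>\<beta> k)" by simp
        also have "\<dots> = (\<Sum>k\<in>{1..l-1}. \<Delta>\<beta> k) + \<Delta>\<beta> (Suc (l - 1))" by (simp add: sum.cl_ivl_Suc)
        finally show ?thesis using l1 by simp
      qed
      have mb: "vnorm (normalize_vec (anc_block n m \<phi> U *\<^sub>v (normalize_vec (F_op (\<Sum>k\<in>{1..l-1}. \<Delta>\<beta> k) H *\<^sub>v \<Psi>) + \<Xi>\<^sub>p))
            - normalize_vec (F_op ((\<Sum>k\<in>{1..l-1}. \<Delta>\<beta> k) + \<Delta>\<beta> l) H *\<^sub>v \<Psi>)) \<le> \<epsilon>"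
        by (rule main_bound[OF p(2) p(5) p(6) ap p(9) p(10) p(11) p(12) p(13) p(14) p(15)])
      show ?thesis using mb unfolding beta by simp
    qed
    done
  show ?thesis
    apply (rule exI[of _ "1::real"])
    apply (rule conjI, simp)
    apply (rule exI[of _ "1::real"])
    apply (rule conjI, simp)
    apply (intro allI)
    apply (rule key)
    done
qed

end
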